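(* Consider a one-site PTM cascade with $n\ge1$ layers and positive total amounts. With $r=r_1/r_2$ as defined in the context, the BMSS value of $S_n^1$ is the smallest positive real root of the polynomial $P(s)=r_2(s)\,\overline{E}-r_1(s)$.
   Context: A one-site PTM cascade with $n$ layers has species $E=S_0^1$ and, for $i=1,\dots,n$, $S_i^0,S_i^1,F_i,Y_i^0,Y_i^1$, with reactions $S_{i-1}^1+S_i^0 \rightleftharpoons Y_i^0 \to S_{i-1}^1+S_i^1$ (rate constants $a_i^0,b_i^0,c_i^0$) and $F_i+S_i^1\rightleftharpoons Y_i^1\to F_i+S_i^0$ (rate constants $a_i^1,b_i^1,c_i^1$), all positive, mass-action kinetics. Put $\delta_i=a_i^1/(b_i^1+c_i^1)$, $\gamma_i=(c_i^1/c_i^0)\delta_i$, $\lambda_i=\frac{b_i^0+c_i^0}{a_i^0}\gamma_i$. Given total amounts $\overline{E},\overline{F}_i,\overline{S}_i$, a steady state is a real solution of: $Y_i^0=\gamma_iF_iS_i^1$, $Y_i^1=\delta_iF_iS_i^1$, $\lambda_iF_iS_i^1=S_i^0S_{i-1}^1$, $\overline{F}_i=F_i+Y_i^1$, $\overline{S}_i=S_i^0+S_i^1+Y_i^0+Y_i^1+Y_{i+1}^0$ ($i=1,\dots,n$, $Y_{n+1}^0:=0$), $\overline{E}=E+Y_1^0$. A BMSS is a steady state with positive total amounts and all concentrations nonnegative; it exists and is unique. Define $d_i(x,y)=(\overline{S}_i-y)-x-\overline{F}_i(\delta_i+\gamma_i)x+\delta_i(\overline{S}_i-y)x-\delta_ix^2$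 and $g_i^Y(x)=\frac{\gamma_i\overline{F}_ix}{1+\delta_ix}$; define rational functions of $s$ recursively by $f_n(s)=s$, $f_{n+1}^Y(s)=0$, and for $i=n,\dots,1$: $f_i^Y(s)=g_i^Y(f_i(s))$, $f_{i-1}(s)=\frac{\lambda_i\overline{F}_if_i(s)}{d_i(f_i(s),f_{i+1}^Y(s))}$. Let $r(s)=f_0(s)+f_1^Y(s)$ and write $r=r_1/r_2$ in reduced form with $r_1,r_2\in\mathbb{R}[s]$. *)

theory Defs
  imports "HOL-Computational_Algebra.Computational_Algebra"
begin

(* Rational functions in s over the reals are modelled as  real poly fract
   (fraction field of R[s]).  The variable s is  Fract [:0,1:] 1. *)

type_synonym ratfun = "real poly fract"

definition rconst :: "real \<Rightarrow> ratfun" where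
  "rconst c = Fract [:c:] 1"

definition rvar :: ratfun where
  "rvar = Fract [:0, 1:] 1"

definition delta :: "(nat \<Rightarrow> real) \<Rightarrow> (nat \<Rightarrow> real) \<Rightarrow> (nat \<Rightarrow> real) \<Rightarrow> nat \<Rightarrow> real" where
  "delta a1 b1 c1 i = a1 i / (b1 i + c1 i)"

definition gamma :: "(nat \<Rightarrow> real) \<Rightarrow> (nat \<Rightarrow> real) \<Rightarrow> (nat \<Rightarrow> real) \<Rightarrow> (nat \<Rightarrow> real) \<Rightarrow> nat \<Rightarrow> real" where
  "gamma c0 a1 b1 c1 i = (c1 i / c0 i) * delta a1 b1 c1 i"

definition lambda :: "(nat \<Rightarrow> real) \<Rightarrow> (nat \<Rightarrow> real) \<Rightarrow> (nat \<Rightarrow> real) \<Rightarrow> (nat \<Rightarrow> real) \<Rightarrow> (nat \<Rightarrow> real) \<Rightarrow> (nat \<Rightarrow> real) \<Rightarrow> nat \<Rightarrow> real" where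
  "lambda a0 b0 c0 a1 b1 c1 i = ((b0 i + c0 i) / a0 i) * gamma c0 a1 b1 c1 i"

definition dfun :: "real \<Rightarrow> real \<Rightarrow> real \<Rightarrow> real \<Rightarrow> ratfun \<Rightarrow> ratfun \<Rightarrow> ratfun" where
  "dfun dl gm Fb Sb x y =
     (rconst Sb - y) - x - rconst (Fb * (dl + gm)) * x + rconst dl * (rconst Sb - y) * x
     - rconst dl * x ^ 2"

definition gYfun :: "real \<Rightarrow> real \<Rightarrow> real \<Rightarrow> ratfun \<Rightarrow> ratfun" where
  "gYfun dl gm Fb x = rconst (gm * Fb) * x / (1 + rconst dl * x)"

(* casc n dl gm lm Fb Sb k = (f_{n-k}, f^Y_{n-k+1}) for k = 0..n;
   f_n = s, f^Y_{n+1} = 0, and for i = n-k: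
   f^Y_i = g_i^Y(f_i),  f_{i-1} = lambda_i Fbar_i f_i / d_i(f_i, f^Y_{i+1}) *)
fun casc :: "nat \<Rightarrow> (nat \<Rightarrow> real) \<Rightarrow> (nat \<Rightarrow> real) \<Rightarrow> (nat \<Rightarrow> real) \<Rightarrow> (nat \<Rightarrow> real)
              \<Rightarrow> (nat \<Rightarrow> real) \<Rightarrow> nat \<Rightarrow> ratfun \<times> ratfun" where
  "casc n dl gm lm Fb Sb 0 = (rvar, 0)"
| "casc n dl gm lm Fb Sb (Suc k) =
     (let i = n - k; fi = fst (casc n dl gm lm Fb Sb k); fYnext = snd (casc n dl gm lm Fb Sb k)
      in (rconst (lm i * Fb i) * fi / dfun (dl i) (gm i) (Fb i) (Sb i) fi fYnext,
          gYfun (dl i) (gm i) (Fb i) fi))"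

definition rfun :: "nat \<Rightarrow> (nat \<Rightarrow> real) \<Rightarrow> (nat \<Rightarrow> real) \<Rightarrow> (nat \<Rightarrow> real) \<Rightarrow> (nat \<Rightarrow> real)
              \<Rightarrow> (nat \<Rightarrow> real) \<Rightarrow> ratfun" where
  "rfun n dl gm lm Fb Sb = fst (casc n dl gm lm Fb Sb n) + snd (casc n dl gm lm Fb Sb n)"

(* Steady state of the n-layer one-site PTM cascade.  Concentrations:
   S0 i = S_i^0, S1 i = S_i^1 (with S1 0 = E), F i = F_i, Y0 i = Y_i^0, Y1 i = Y_i^1,
   for i = 1..n.  Y_{n+1}^0 := 0. *)
definition steady_state ::
  "nat \<Rightarrow> (nat \<Rightarrow> real) \<Rightarrow> (nat \<Rightarrow> real) \<Rightarrow> (nat \<Rightarrow> real) \<Rightarrow> real \<Rightarrow> (nat \<Rightarrow> real) \<Rightarrow> (nat \<Rightarrow> real)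
   \<Rightarrow> (nat \<Rightarrow> real) \<Rightarrow> (nat \<Rightarrow> real) \<Rightarrow> (nat \<Rightarrow> real) \<Rightarrow> (nat \<Rightarrow> real) \<Rightarrow> (nat \<Rightarrow> real) \<Rightarrow> bool" where
  "steady_state n dl gm lm Eb Fb Sb S0 S1 F Y0 Y1 \<longleftrightarrow>
     (\<forall>i\<in>{1..n}.
        Y0 i = gm i * F i * S1 i \<and>
        Y1 i = dl i * F i * S1 i \<and>
        lm i * F i * S1 i = S0 i * S1 (i - 1) \<and>
        Fb i = F i + Y1 i \<and>
        Sb i = S0 i + S1 i + Y0 i + Y1 i + (if i = n then 0 else Y0 (i + 1))) \<and>
     Eb = S1 0 + Y0 1"

definition bmss ::
  "nat \<Rightarrow> (nat \<Rightarrow> real) \<Rightarrow> (nat \<Rightarrow> real) \<Rightarrow> (nat \<Rightarrow> real) \<Rightarrow> real \<Rightarrow> (nat \<Rightarrow> real) \<Rightarrow> (nat \<Rightarrow> real)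
   \<Rightarrow> (nat \<Rightarrow> real) \<Rightarrow> (nat \<Rightarrow> real) \<Rightarrow> (nat \<Rightarrow> real) \<Rightarrow> (nat \<Rightarrow> real) \<Rightarrow> (nat \<Rightarrow> real) \<Rightarrow> bool" where
  "bmss n dl gm lm Eb Fb Sb S0 S1 F Y0 Y1 \<longleftrightarrow>
     steady_state n dl gm lm Eb Fb Sb S0 S1 F Y0 Y1 \<and>
     S1 0 \<ge> 0 \<and>
     (\<forall>i\<in>{1..n}. S0 i \<ge> 0 \<and> S1 i \<ge> 0 \<and> F i \<ge> 0 \<and> Y0 i \<ge> 0 \<and> Y1 i \<ge> 0)"

end

theory Submission
  imports Defs "HOL-Computational_Algebra.Field_as_Ring"
begin


definition evalat :: "real \<Rightarrow> ratfun \<Rightarrow> real \<Rightarrow> bool" where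
  "evalat s q v \<longleftrightarrow> (\<exists>p d. poly d s \<noteq> 0 \<and> q = Fract p d \<and> v = poly p s / poly d s)"

lemma ev_const: "evalat s (rconst c) c"
  unfolding evalat_def rconst_def by (rule exI[of _ "[:c:]"], rule exI[of _ 1]) simp

lemma ev_var: "evalat s rvar s"
  unfolding evalat_def rvar_def by (rule exI[of _ "[:0,1:]"], rule exI[of _ 1]) simp

lemma ev_zero: "evalat s 0 0"
  unfolding evalat_def Zero_fract_def by (rule exI[of _ 0], rule exI[of _ 1]) simp

lemma ev_one: "evalat s 1 1"
  unfolding evalat_def One_fract_def by (rule exI[of _ 1], rule exI[of _ 1]) simp

lemma ev_add: "evalat s q1 v1 \<Longrightarrow> evalat s q2 v2 \<Longrightarrow> evalat s (q1 + q2) (v1 + v2)"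
  unfolding evalat_def
proof (elim exE conjE)
  fix p1 d1 p2 d2 assume h: "poly d1 s \<noteq> 0" "q1 = Fract p1 d1" "v1 = poly p1 s / poly d1 s"
    "poly d2 s \<noteq> 0" "q2 = Fract p2 d2" "v2 = poly p2 s / poly d2 s"
  have d: "d1 \<noteq> 0" "d2 \<noteq> 0" using h by auto
  show "\<exists>p d. poly d s \<noteq> 0 \<and> q1 + q2 = Fract p d \<and> v1 + v2 = poly p s / poly d s"
  proof (intro exI conjI)
    show "poly (d1 * d2) s \<noteq> 0" using h by simp
    show "q1 + q2 = Fract (p1 * d2 + p2 * d1) (d1 * d2)" using h d by simp
    show "v1 + v2 = poly (p1 * d2 + p2 * d1) s / poly (d1 * d2) s"
      unfolding h(3) h(6) poly_mult poly_add poly_diff using h(1) h(4) by (simp add: add_frac_eq)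
  qed
qed

lemma ev_diff: "evalat s q1 v1 \<Longrightarrow> evalat s q2 v2 \<Longrightarrow> evalat s (q1 - q2) (v1 - v2)"
  unfolding evalat_def
proof (elim exE conjE)
  fix p1 d1 p2 d2 assume h: "poly d1 s \<noteq> 0" "q1 = Fract p1 d1" "v1 = poly p1 s / poly d1 s"
    "poly d2 s \<noteq> 0" "q2 = Fract p2 d2" "v2 = poly p2 s / poly d2 s"
  have d: "d1 \<noteq> 0" "d2 \<noteq> 0" using h by auto
  show "\<exists>p d. poly d s \<noteq> 0 \<and> q1 - q2 = Fract p d \<and> v1 - v2 = poly p s / poly d s"
  proof (intro exI conjI)
    show "poly (d1 * d2) s \<noteq> 0" using h by simp
    show "q1 - q2 = Fract (p1 * d2 - p2 * d1) (d1 * d2)" using h d by simp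
    show "v1 - v2 = poly (p1 * d2 - p2 * d1) s / poly (d1 * d2) s"
      unfolding h(3) h(6) poly_mult poly_add poly_diff using h(1) h(4) by (simp add: diff_frac_eq)
  qed
qed

lemma ev_mult: "evalat s q1 v1 \<Longrightarrow> evalat s q2 v2 \<Longrightarrow> evalat s (q1 * q2) (v1 * v2)"
  unfolding evalat_def
proof (elim exE conjE)
  fix p1 d1 p2 d2 assume h: "poly d1 s \<noteq> 0" "q1 = Fract p1 d1" "v1 = poly p1 s / poly d1 s"
    "poly d2 s \<noteq> 0" "q2 = Fract p2 d2" "v2 = poly p2 s / poly d2 s"
  have d: "d1 \<noteq> 0" using h by auto
  show "\<exists>p d. poly d s \<noteq> 0 \<and> q1 * q2 = Fract p d \<and> v1 * v2 = poly p s / poly d s"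
  proof (intro exI conjI)
    show "poly (d1 * d2) s \<noteq> 0" using h by simp
    show "q1 * q2 = Fract (p1 * p2) (d1 * d2)" using h d by simp
    show "v1 * v2 = poly (p1 * p2) s / poly (d1 * d2) s"
      unfolding h(3) h(6) poly_mult poly_add poly_diff using h(1) h(4) by (simp add: times_divide_times_eq)
  qed
qed

lemma ev_div: "evalat s q1 v1 \<Longrightarrow> evalat s q2 v2 \<Longrightarrow> v2 \<noteq> 0 \<Longrightarrow> evalat s (q1 / q2) (v1 / v2)"
  unfolding evalat_def
proof (elim exE conjE)
  fix p1 d1 p2 d2 assume h: "poly d1 s \<noteq> 0" "q1 = Fract p1 d1" "v1 = poly p1 s / poly d1 s"
    "poly d2 s \<noteq> 0" "q2 = Fract p2 d2" "v2 = poly p2 s / poly d2 s" and v: "v2 \<noteq> 0"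
  have d: "poly p2 s \<noteq> 0" "d1 \<noteq> 0" "d2 \<noteq> 0" using h v by auto
  show "\<exists>p d. poly d s \<noteq> 0 \<and> q1 / q2 = Fract p d \<and> v1 / v2 = poly p s / poly d s"
  proof (intro exI conjI)
    show "poly (d1 * p2) s \<noteq> 0" using h d by simp
    show "q1 / q2 = Fract (p1 * d2) (d1 * p2)" using h d by simp
    show "v1 / v2 = poly (p1 * d2) s / poly (d1 * p2) s"
      unfolding h(3) h(6) poly_mult by simp
  qed
qed

lemma ev_pow2: "evalat s q v \<Longrightarrow> evalat s (q ^ 2) (v ^ 2)"
  by (simp add: power2_eq_square ev_mult)

lemma ev_reduced:
  assumes "evalat s (Fract r1 r2) v" "r2 \<noteq> 0" "coprime r1 r2"
  shows "poly r2 s \<noteq> 0 \<and> v = poly r1 s / poly r2 s"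
proof -
  obtain p d where h: "poly d s \<noteq> 0" "Fract r1 r2 = Fract p d" "v = poly p s / poly d s"
    using assms(1) unfolding evalat_def by (elim exE conjE) (rule that)
  have d0: "d \<noteq> 0" using h(1) by auto
  have e: "r1 * d = p * r2" using h(2) eq_fract(1)[OF assms(2) d0] by simp
  have e2: "d * r1 = r2 * p" using e by (simp add: ac_simps)
  have dv: "r2 dvd d * r1" unfolding e2 by simp
  have cp: "coprime r2 r1" using assms(3) by (simp add: coprime_commute)
  have "r2 dvd d" by (rule coprime_dvd_mult_left_iff[OF cp, THEN iffD1, OF dv])
  then obtain k where k: "d = r2 * k" by (rule dvdE)
  have r2s: "poly r2 s \<noteq> 0" using h(1) unfolding k by simp
  have pe: "poly r1 s * poly d s = poly p s * poly r2 s" using arg_cong[OF e, of "\<lambda>q. poly q s"] by simp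
  have "v = poly p s / poly d s" by (fact h(3))
  also have "\<dots> = poly r1 s / poly r2 s" using pe r2s h(1) by (simp add: frac_eq_eq)
  finally show ?thesis using r2s by simp
qed

definition dR :: "real \<Rightarrow> real \<Rightarrow> real \<Rightarrow> real \<Rightarrow> real \<Rightarrow> real \<Rightarrow> real" where
  "dR dl gm Fb Sb x y = (Sb - y) - x - (Fb * (dl + gm)) * x + dl * (Sb - y) * x - dl * x ^ 2"

lemma ev_dfun: "evalat s x u \<Longrightarrow> evalat s y w \<Longrightarrow> evalat s (dfun dl gm Fb Sb x y) (dR dl gm Fb Sb u w)"
proof -
  assume x: "evalat s x u" and y: "evalat s y w"
  have a: "evalat s (rconst Sb - y) (Sb - w)" by (rule ev_diff[OF ev_const y])
  have b: "evalat s (rconst (Fb * (dl + gm)) * x) ((Fb * (dl + gm)) * u)" by (rule ev_mult[OF ev_const x])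
  have c: "evalat s (rconst dl * (rconst Sb - y) * x) (dl * (Sb - w) * u)" by (rule ev_mult[OF ev_mult[OF ev_const a] x])
  have d: "evalat s (rconst dl * x ^ 2) (dl * u ^ 2)" by (rule ev_mult[OF ev_const ev_pow2[OF x]])
  show ?thesis unfolding dfun_def dR_def
    by (rule ev_diff[OF ev_add[OF ev_diff[OF ev_diff[OF a x] b] c] d])
qed

lemma ev_gY: "evalat s x u \<Longrightarrow> 1 + dl * u \<noteq> 0 \<Longrightarrow> evalat s (gYfun dl gm Fb x) (gm * Fb * u / (1 + dl * u))"
proof -
  assume x: "evalat s x u" and n: "1 + dl * u \<noteq> 0"
  show ?thesis unfolding gYfun_def
    by (rule ev_div[OF ev_mult[OF ev_const x] ev_add[OF ev_one ev_mult[OF ev_const x]] n])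
qed



lemma dR_factor: "1 + dl * x \<noteq> 0 \<Longrightarrow> dR dl gm Fb Sb x y = (1 + dl * x) * (Sb - y - x - Fb * (dl + gm) * (x / (1 + dl * x)))"
  unfolding dR_def by (simp add: field_simps power2_eq_square)

lemma step_real:
  fixes dl gm lm Fb Sb S S0 F C Sp x y :: real
  assumes p: "dl > 0" "gm > 0" "lm > 0" "F > 0" "S > 0" "S0 > 0"
    and fb: "F * (1 + dl * S) = Fb"
    and sb: "Sb = S0 + S + gm * F * S + dl * F * S + C"
    and lmeq: "lm * F * S = S0 * Sp"
    and x: "0 < x" "x \<le> S" and y: "0 \<le> y" "y \<le> C"
  shows "dR dl gm Fb Sb x y > 0 \<and>
    0 < lm * Fb * x / dR dl gm Fb Sb x y \<and> lm * Fb * x / dR dl gm Fb Sb x y \<le> Sp \<and>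
    (x < S \<longrightarrow> lm * Fb * x / dR dl gm Fb Sb x y < Sp) \<and>
    (x = S \<and> y = C \<longrightarrow> lm * Fb * x / dR dl gm Fb Sb x y = Sp \<and> gm * Fb * x / (1 + dl * x) = gm * F * S) \<and>
    0 \<le> gm * Fb * x / (1 + dl * x) \<and> gm * Fb * x / (1 + dl * x) \<le> gm * F * S"
proof -
  define u where "u = x / (1 + dl * x)"
  define U where "U = S / (1 + dl * S)"
  have dx: "1 + dl * x > 0" using p x by (simp add: add_pos_pos)
  have dS: "1 + dl * S > 0" using p by (simp add: add_pos_pos)
  have u0: "u > 0" unfolding u_def using dx x by simp
  have uU: "u \<le> U" unfolding u_def U_def using dx dS x p
    by (simp add: divide_simps) (simp add: algebra_simps mult_left_mono)
  have uUs: "x < S \<Longrightarrow> u < U" unfolding u_def U_def using dx dS x p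
    by (simp add: divide_simps) (simp add: algebra_simps)
  have FbU: "Fb * U = F * S" unfolding U_def fb[symmetric] using dS by (simp add: field_simps)
  have Fb0: "Fb > 0" using fb p(4) dS by (metis mult_pos_pos)
  define Q where "Q = Sb - y - x - Fb * (dl + gm) * u"
  have dRQ: "dR dl gm Fb Sb x y = (1 + dl * x) * Q" unfolding Q_def u_def using dR_factor dx by simp
  have gFU: "gm * Fb * U = gm * F * S"
  proof -
    have "gm * Fb * U = gm * (Fb * U)" by (simp add: mult.assoc)
    then show ?thesis using FbU by simp
  qed
  have "Fb * (dl + gm) * U = (dl + gm) * (Fb * U)" by (simp add: algebra_simps)
  also have "\<dots> = (dl + gm) * F * S" using FbU by simp
  finally have FbdU: "Fb * (dl + gm) * U = (dl + gm) * F * S" .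
  have "Fb * (dl + gm) * u \<le> Fb * (dl + gm) * U" using uU Fb0 p by (simp add: mult_left_mono)
  then have QS0: "Q \<ge> S0" unfolding Q_def using sb x y FbdU by (simp add: algebra_simps)
  then have Q0: "Q > 0" using p by simp
  have x'eq: "lm * Fb * x / dR dl gm Fb Sb x y = lm * Fb * u / Q"
    unfolding dRQ u_def using dx Q0 by (simp add: field_simps)
  have "lm * Fb * U = lm * (Fb * U)" by simp
  also have "\<dots> = lm * F * S" using FbU by simp
  also have "\<dots> = S0 * Sp" by (rule lmeq)
  finally have Sp_eq: "Sp = lm * Fb * U / S0" using p by (simp add: field_simps)
  have y'eq: "gm * Fb * x / (1 + dl * x) = gm * Fb * u" unfolding u_def by simp
  have a1: "lm * Fb * u / Q \<le> lm * Fb * U / S0"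
    by (rule frac_le) (use p Fb0 u0 uU QS0 in auto)
  have a2: "x < S \<Longrightarrow> lm * Fb * u / Q < lm * Fb * U / S0"
  proof -
    assume "x < S"
    then have "lm * Fb * u < lm * Fb * U" using uUs p Fb0 by simp
    then have "lm * Fb * u / Q < lm * Fb * U / Q" using Q0 by (simp add: divide_strict_right_mono)
    also have "\<dots> \<le> lm * Fb * U / S0"
      by (rule divide_left_mono) (use p Fb0 u0 uU QS0 in auto)
    finally show ?thesis .
  qed
  have a3: "x = S \<and> y = C \<Longrightarrow> lm * Fb * u / Q = lm * Fb * U / S0 \<and> gm * Fb * u = gm * F * S"
  proof -
    assume h: "x = S \<and> y = C"
    then have "u = U" unfolding u_def U_def by simp
    moreover have "Q = S0" unfolding Q_def using h \<open>u = U\<close> sb FbdU by (simp add: algebra_simps)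
    ultimately show ?thesis using gFU by simp
  qed
  have "gm * Fb * u \<le> gm * Fb * U" using uU p Fb0 by simp
  then have a4: "gm * Fb * u \<le> gm * F * S" using gFU by simp
  have b1: "dR dl gm Fb Sb x y > 0" unfolding dRQ using dx Q0 by simp
  have b2: "0 < lm * Fb * u / Q" using p Fb0 u0 Q0 by simp
  have b3: "lm * Fb * u / Q \<le> Sp" using a1 unfolding Sp_eq[symmetric] .
  have b4: "x < S \<longrightarrow> lm * Fb * u / Q < Sp" using a2 unfolding Sp_eq[symmetric] by blast
  have b5: "x = S \<and> y = C \<longrightarrow> lm * Fb * u / Q = Sp \<and> gm * Fb * u = gm * F * S"
    using a3 unfolding Sp_eq[symmetric] by blast
  have b6: "0 \<le> gm * Fb * u" using p Fb0 u0 by simp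
  show ?thesis
    unfolding x'eq y'eq using b1 b2 b3 b4 b5 b6 a4 by blast
qed



fun cascR :: "nat \<Rightarrow> (nat \<Rightarrow> real) \<Rightarrow> (nat \<Rightarrow> real) \<Rightarrow> (nat \<Rightarrow> real) \<Rightarrow> (nat \<Rightarrow> real)
              \<Rightarrow> (nat \<Rightarrow> real) \<Rightarrow> real \<Rightarrow> nat \<Rightarrow> real \<times> real" where
  "cascR n dl gm lm Fb Sb s 0 = (s, 0)"
| "cascR n dl gm lm Fb Sb s (Suc k) =
     (let i = n - k; x = fst (cascR n dl gm lm Fb Sb s k); y = snd (cascR n dl gm lm Fb Sb s k)
      in (lm i * Fb i * x / dR (dl i) (gm i) (Fb i) (Sb i) x y,
          gm i * Fb i * x / (1 + dl i * x)))"

lemma S1_pos: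
  assumes SS: "steady_state n dl gm lm Eb Fb Sb S0 S1 F Y0 Y1"
    and nn: "S1 0 \<ge> 0" "\<forall>i\<in>{1..n}. S0 i \<ge> 0 \<and> S1 i \<ge> 0 \<and> F i \<ge> 0"
    and par: "\<forall>i\<in>{1..n}. dl i > 0 \<and> gm i > 0 \<and> lm i > 0 \<and> Fb i > 0 \<and> Sb i > 0"
    and E: "Eb > 0" and n: "n \<ge> 1"
  shows "\<forall>i\<le>n. S1 i > 0"
proof -
  have eqs: "\<And>i. i \<in> {1..n} \<Longrightarrow> Y0 i = gm i * F i * S1 i \<and>
        Y1 i = dl i * F i * S1 i \<and>
        lm i * F i * S1 i = S0 i * S1 (i - 1) \<and>
        Fb i = F i + Y1 i \<and>
        Sb i = S0 i + S1 i + Y0 i + Y1 i + (if i = n then 0 else Y0 (i + 1))"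
    using SS unfolding steady_state_def by blast
  have Eeq: "Eb = S1 0 + Y0 1" using SS unfolding steady_state_def by blast
  have Fpos: "\<And>i. i \<in> {1..n} \<Longrightarrow> F i > 0"
  proof -
    fix i assume i: "i \<in> {1..n}"
    have "Fb i = F i * (1 + dl i * S1 i)" using eqs[OF i] by (simp add: algebra_simps)
    moreover have "Fb i > 0" "F i \<ge> 0" using par nn i by auto
    ultimately show "F i > 0" by (metis less_eq_real_def mult_zero_left)
  qed
  have key: "\<And>i. i \<in> {1..n} \<Longrightarrow> S1 i > 0 \<Longrightarrow> S1 (i - 1) > 0"
  proof -
    fix i assume i: "i \<in> {1..n}" and s: "S1 i > 0"
    have "lm i * F i * S1 i > 0" using par i Fpos[OF i] s by simp
    then have "S0 i * S1 (i - 1) > 0" using eqs[OF i] by simp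
    moreover have "S0 i \<ge> 0" using nn i by auto
    moreover have "S1 (i - 1) \<ge> 0"
    proof (cases "i - 1 = 0")
      case True then show ?thesis using nn by simp
    next
      case False then have "i - 1 \<in> {1..n}" using i by auto
      then show ?thesis using nn by blast
    qed
    ultimately show "S1 (i - 1) > 0" by (metis less_eq_real_def mult_zero_right)
  qed
  have base: "S1 0 > 0"
  proof (rule ccontr)
    assume "\<not> S1 0 > 0"
    then have "S1 0 = 0" using nn by simp
    then have "Y0 1 > 0" using Eeq E by simp
    moreover have i1: "1 \<in> {1..n}" using n by simp
    ultimately have "gm 1 * F 1 * S1 1 > 0" using eqs[OF i1] by simp
    then have "S1 1 > 0" using nn i1 by (metis less_eq_real_def mult_zero_right)
    then have "S1 0 > 0" using key[OF i1] by simp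
    then show False using \<open>S1 0 = 0\<close> by simp
  qed
  have step: "\<And>i. i \<in> {1..n} \<Longrightarrow> S1 (i - 1) > 0 \<Longrightarrow> S1 i > 0"
  proof (rule ccontr)
    fix i assume i: "i \<in> {1..n}" and p: "S1 (i - 1) > 0" and c: "\<not> S1 i > 0"
    then have z: "S1 i = 0" using nn by force
    then have "S0 i * S1 (i - 1) = 0" using eqs[OF i] by simp
    then have "S0 i = 0" using p by simp
    then have sb: "Sb i = (if i = n then 0 else Y0 (i + 1))" using eqs[OF i] z by simp
    show False
    proof (cases "i = n")
      case True
      have "Sb i > 0" using par i by blast
      then show False using sb True by simp
    next
      case False
      then have i1: "i + 1 \<in> {1..n}" using i by auto
      have "Sb i > 0" using par i by blast
      then have "Y0 (i + 1) > 0" using sb False by simp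
      then have "gm (i+1) * F (i+1) * S1 (i+1) > 0" using eqs[OF i1] by simp
      then have "S1 (i+1) > 0" using nn i1 by (metis less_eq_real_def mult_zero_right)
      then have "S1 i > 0" using key[OF i1] by simp
      then show False using z by simp
    qed
  qed
  show ?thesis
  proof (intro allI impI)
    fix i assume "i \<le> n"
    then show "S1 i > 0"
    proof (induction i)
      case 0 then show ?case using base by simp
    next
      case (Suc i) then show ?case using step[of "Suc i"] by simp
    qed
  qed
qed

lemma main_ind:
  assumes SS: "steady_state n dl gm lm Eb Fb Sb S0 S1 F Y0 Y1"
    and par: "\<forall>i\<in>{1..n}. dl i > 0 \<and> gm i > 0 \<and> lm i > 0"
    and S1p: "\<forall>i\<le>n. S1 i > 0" and S0p: "\<forall>i\<in>{1..n}. S0 i > 0"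
    and Fp: "\<forall>i\<in>{1..n}. F i > 0"
    and s: "0 < s" "s \<le> S1 n"
  shows "k \<le> n \<Longrightarrow>
    evalat s (fst (casc n dl gm lm Fb Sb k)) (fst (cascR n dl gm lm Fb Sb s k)) \<and>
    evalat s (snd (casc n dl gm lm Fb Sb k)) (snd (cascR n dl gm lm Fb Sb s k)) \<and>
    0 < fst (cascR n dl gm lm Fb Sb s k) \<and> fst (cascR n dl gm lm Fb Sb s k) \<le> S1 (n - k) \<and>
    (s < S1 n \<longrightarrow> fst (cascR n dl gm lm Fb Sb s k) < S1 (n - k)) \<and>
    (s = S1 n \<longrightarrow> fst (cascR n dl gm lm Fb Sb s k) = S1 (n - k) \<and>
        snd (cascR n dl gm lm Fb Sb s k) = (if k = 0 then 0 else Y0 (n - k + 1))) \<and>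
    0 \<le> snd (cascR n dl gm lm Fb Sb s k) \<and>
    snd (cascR n dl gm lm Fb Sb s k) \<le> (if k = 0 then 0 else Y0 (n - k + 1))"
proof (induction k)
  case 0
  then show ?case using s by (simp add: ev_var ev_zero)
next
  case (Suc k)
  define i where "i = n - k"
  have i: "i \<in> {1..n}" using Suc.prems unfolding i_def by auto
  define x where "x = fst (cascR n dl gm lm Fb Sb s k)"
  define y where "y = snd (cascR n dl gm lm Fb Sb s k)"
  define fx where "fx = fst (casc n dl gm lm Fb Sb k)"
  define fy where "fy = snd (casc n dl gm lm Fb Sb k)"
  define cap where "cap = (if k = 0 then 0 else Y0 (n - k + 1))"
  have IH: "evalat s fx x" "evalat s fy y" "0 < x" "x \<le> S1 i" "s < S1 n \<longrightarrow> x < S1 i"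
     "s = S1 n \<longrightarrow> x = S1 i \<and> y = cap" "0 \<le> y" "y \<le> cap"
    using Suc.IH Suc.prems unfolding x_def y_def fx_def fy_def cap_def i_def by auto
  have eqs: "Y0 i = gm i * F i * S1 i \<and>
        Y1 i = dl i * F i * S1 i \<and>
        lm i * F i * S1 i = S0 i * S1 (i - 1) \<and>
        Fb i = F i + Y1 i \<and>
        Sb i = S0 i + S1 i + Y0 i + Y1 i + (if i = n then 0 else Y0 (i + 1))"
    using SS i unfolding steady_state_def by blast
  have capi: "(if i = n then 0 else Y0 (i + 1)) = cap"
    unfolding cap_def i_def using Suc.prems by auto
  have fb: "F i * (1 + dl i * S1 i) = Fb i" using eqs by (simp add: algebra_simps)
  have sb: "Sb i = S0 i + S1 i + gm i * F i * S1 i + dl i * F i * S1 i + cap"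
    using eqs capi by simp
  have lmeq: "lm i * F i * S1 i = S0 i * S1 (i - 1)" using eqs by simp
  have pp: "dl i > 0" "gm i > 0" "lm i > 0" "F i > 0" "S1 i > 0" "S0 i > 0"
    using par Fp S0p S1p i by auto
  note R = step_real[OF pp fb sb lmeq IH(3,4,7,8)]
  have dx: "1 + dl i * x \<noteq> 0" using pp IH(3) by (smt (verit) mult_pos_pos)
  have Rk: "cascR n dl gm lm Fb Sb s (Suc k) = (lm i * Fb i * x / dR (dl i) (gm i) (Fb i) (Sb i) x y,
          gm i * Fb i * x / (1 + dl i * x))"
    unfolding x_def y_def i_def by (simp add: Let_def)
  have Ck: "casc n dl gm lm Fb Sb (Suc k) = (rconst (lm i * Fb i) * fx / dfun (dl i) (gm i) (Fb i) (Sb i) fx fy,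
          gYfun (dl i) (gm i) (Fb i) fx)"
    unfolding fx_def fy_def i_def by (simp add: Let_def)
  have e1: "evalat s (rconst (lm i * Fb i) * fx / dfun (dl i) (gm i) (Fb i) (Sb i) fx fy)
     (lm i * Fb i * x / dR (dl i) (gm i) (Fb i) (Sb i) x y)"
    by (rule ev_div[OF ev_mult[OF ev_const IH(1)] ev_dfun[OF IH(1,2)]]) (use R in simp)
  have e2: "evalat s (gYfun (dl i) (gm i) (Fb i) fx) (gm i * Fb i * x / (1 + dl i * x))"
    by (rule ev_gY[OF IH(1) dx])
  have nk: "n - Suc k = i - 1" "n - Suc k + 1 = i" using Suc.prems unfolding i_def by auto
  show ?case
  proof -
    have y0: "Y0 i = gm i * F i * S1 i" using eqs by simp
    have si: "Suc (i - Suc 0) = i" using i by auto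
    show ?thesis unfolding Rk Ck fst_conv snd_conv nk(2) nk(1) using e1 e2 R IH(5,6) y0 si by auto
  qed
qed



theorem mainTheorem10:
  fixes n :: nat
    and a0 b0 c0 a1 b1 c1 :: "nat \<Rightarrow> real"
    and Eb :: real and Fb Sb :: "nat \<Rightarrow> real"
    and S0 S1 F Y0 Y1 :: "nat \<Rightarrow> real"
    and r1 r2 :: "real poly"
  assumes n: "n \<ge> 1"
    and rates: "\<forall>i\<in>{1..n}. a0 i > 0 \<and> b0 i > 0 \<and> c0 i > 0 \<and> a1 i > 0 \<and> b1 i > 0 \<and> c1 i > 0"
    and totals: "Eb > 0" "\<forall>i\<in>{1..n}. Fb i > 0 \<and> Sb i > 0"
    and reduced: "r2 \<noteq> 0" "coprime r1 r2"
    and r_eq: "rfun n (delta a1 b1 c1) (gamma c0 a1 b1 c1) (lambda a0 b0 c0 a1 b1 c1) Fb Sb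
                 = Fract r1 r2"
    and B: "bmss n (delta a1 b1 c1) (gamma c0 a1 b1 c1) (lambda a0 b0 c0 a1 b1 c1) Eb Fb Sb
              S0 S1 F Y0 Y1"
  shows "S1 n > 0 \<and> poly (smult Eb r2 - r1) (S1 n) = 0 \<and>
         (\<forall>s::real. s > 0 \<and> poly (smult Eb r2 - r1) s = 0 \<longrightarrow> S1 n \<le> s)"
proof -
  define dl where "dl = delta a1 b1 c1"
  define gm where "gm = gamma c0 a1 b1 c1"
  define lm where "lm = lambda a0 b0 c0 a1 b1 c1"
  have par: "\<forall>i\<in>{1..n}. dl i > 0 \<and> gm i > 0 \<and> lm i > 0"
    using rates unfolding dl_def gm_def lm_def delta_def gamma_def lambda_def
    by (auto intro!: mult_pos_pos divide_pos_pos add_pos_pos)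
  have SS: "steady_state n dl gm lm Eb Fb Sb S0 S1 F Y0 Y1"
    and nn0: "S1 0 \<ge> 0"
    and nn: "\<forall>i\<in>{1..n}. S0 i \<ge> 0 \<and> S1 i \<ge> 0 \<and> F i \<ge> 0 \<and> Y0 i \<ge> 0 \<and> Y1 i \<ge> 0"
    using B unfolding bmss_def dl_def gm_def lm_def by auto
  have eqs: "\<And>i. i \<in> {1..n} \<Longrightarrow> Y0 i = gm i * F i * S1 i \<and>
        Y1 i = dl i * F i * S1 i \<and>
        lm i * F i * S1 i = S0 i * S1 (i - 1) \<and>
        Fb i = F i + Y1 i"
    using SS unfolding steady_state_def by blast
  have Eeq: "Eb = S1 0 + Y0 1" using SS unfolding steady_state_def by blast
  have S1p: "\<forall>i\<le>n. S1 i > 0"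
    by (rule S1_pos[OF SS nn0]) (use nn par totals n in auto)
  have Fp: "\<forall>i\<in>{1..n}. F i > 0"
  proof
    fix i assume i: "i \<in> {1..n}"
    have "Fb i = F i * (1 + dl i * S1 i)" using eqs[OF i] by (simp add: algebra_simps)
    moreover have "Fb i > 0" "F i \<ge> 0" using totals nn i by auto
    ultimately show "F i > 0" by (metis less_eq_real_def mult_zero_left)
  qed
  have S0p: "\<forall>i\<in>{1..n}. S0 i > 0"
  proof
    fix i assume i: "i \<in> {1..n}"
    have "lm i * F i * S1 i > 0" using par i Fp S1p by simp
    then have a: "S0 i * S1 (i - 1) > 0" using eqs[OF i] by simp
    have "i - 1 \<le> n" using i by auto
    then have "S1 (i - 1) > 0" using S1p by blast
    with a show "S0 i > 0" by (simp add: zero_less_mult_iff)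
  qed
  have val: "\<And>s. 0 < s \<Longrightarrow> s \<le> S1 n \<Longrightarrow> \<exists>v. poly r2 s \<noteq> 0 \<and> v = poly r1 s / poly r2 s \<and>
      (s < S1 n \<longrightarrow> v < Eb) \<and> (s = S1 n \<longrightarrow> v = Eb)"
  proof -
    fix s :: real assume s: "0 < s" "s \<le> S1 n"
    note M = main_ind[OF SS par S1p S0p Fp s order_refl]
    have ev: "evalat s (rfun n dl gm lm Fb Sb)
       (fst (cascR n dl gm lm Fb Sb s n) + snd (cascR n dl gm lm Fb Sb s n))"
      unfolding rfun_def using M by (intro ev_add) auto
    then have ev2: "evalat s (Fract r1 r2) (fst (cascR n dl gm lm Fb Sb s n) + snd (cascR n dl gm lm Fb Sb s n))"
      using r_eq unfolding dl_def gm_def lm_def by simp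
    note RR = ev_reduced[OF ev2 reduced]
    have cap: "(if n = 0 then 0 else Y0 (n - n + 1)) = Y0 1" using n by simp
    show "?thesis s"
      apply (rule exI[where x="fst (cascR n dl gm lm Fb Sb s n) + snd (cascR n dl gm lm Fb Sb s n)"])
      using RR M cap Eeq by auto
  qed
  have S1n: "S1 n > 0" using S1p by simp
  obtain v where v: "poly r2 (S1 n) \<noteq> 0" "v = poly r1 (S1 n) / poly r2 (S1 n)" "v = Eb"
    using val[OF S1n order_refl] by auto
  have root: "poly (smult Eb r2 - r1) (S1 n) = 0"
    using v by (simp add: field_simps)
  have minimal: "\<forall>s::real. s > 0 \<and> poly (smult Eb r2 - r1) s = 0 \<longrightarrow> S1 n \<le> s"
  proof (intro allI impI)
    fix s :: real assume h: "s > 0 \<and> poly (smult Eb r2 - r1) s = 0"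
    show "S1 n \<le> s"
    proof (rule ccontr)
      assume "\<not> S1 n \<le> s"
      then have lt: "s < S1 n" by simp
      obtain w where w: "poly r2 s \<noteq> 0" "w = poly r1 s / poly r2 s" "w < Eb"
        using val[of s] h lt by auto
      have "poly r1 s = Eb * poly r2 s" using h by simp
      then have "w = Eb" using w by simp
      then show False using w by simp
    qed
  qed
  show ?thesis using S1n root minimal by blast
qed


end
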